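(* Let $a,e\in\mathbb{R}$, $\omega>0$, and let $\alpha_i(t)$ ($i=1,\dots,4$) be scalar continuous functions (not necessarily odd). (i) Suppose $\alpha_3(t)$ is $\omega$-periodic, $a(a+e)<0$, and there exists $k\in\mathbb{Z}$ with $\int_0^\omega\alpha_3(s)\,ds=2\pi k$. Then the solution $$x(t)=\sqrt{-a(a+e)}\sin\Big(\int_0^t\alpha_3(s)ds\Big),\ y(t)=\sqrt{-a(a+e)}\cos\Big(\int_0^t\alpha_3(s)ds\Big),\ z(t)=-a$$ of the system $$\begin{aligned}\dot x&=(ax+xz)(1+\alpha_1(t))+x(a+z)\alpha_2(t)+y\alpha_3(t),\\ \dot y&=(ay+yz)(1+\alpha_1(t))+y(a+z)\alpha_2(t)-x\alpha_3(t),\\ \dot z&=(ez-x^2-y^2-z^2)(1+\alpha_1(t)+\alpha_2(t))\end{aligned}$$ is $\omega$-periodic (the period not necessarily minimal). (ii) Suppose $\alpha_3(t)+a^4\alpha_4(t)$ is $\omega$-periodic and there exists $k\in\mathbb{Z}$ with $\int_0^\omega(\alpha_3(s)+a^4\alpha_4(s))\,ds=2\pi k$. Then the solution $$x(t)=a\sin\Big(\int_0^t(\alpha_3(s)+a^4\alpha_4(s))ds\Big),\ y(t)=a\cos\Big(\int_0^t(\alpha_3(s)+a^4\alpha_4(s))ds\Big),\ z(t)=-a$$ of the system $$\begin{aligned}\dot x&=(ax+xz)(1+\alpha_1(t))+x(a+z)\alpha_2(t)+y\alpha_3(t)-y(x^2+y^2)(4az+x^2+y^2+2z^2)\alpha_4(t),\\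 \dot y&=(ay+yz)(1+\alpha_1(t))+y(a+z)\alpha_2(t)-x\alpha_3(t)+x(x^2+y^2)(4az+x^2+y^2+2z^2)\alpha_4(t),\\ \dot z&=-(2az+x^2+y^2+z^2)(1+\alpha_1(t)+\alpha_2(t))\end{aligned}$$ is $\omega$-periodic (the period not necessarily minimal). *)

theory Defs
  imports "HOL-Analysis.Analysis"
begin

definition oint :: "(real \<Rightarrow> real) \<Rightarrow> real \<Rightarrow> real \<Rightarrow> real" where
  "oint f a b = (if a \<le> b then integral {a..b} f else - integral {b..a} f)"

end

theory Submission
  imports Defs
begin

lemma gen1: "P * B = - (a^4) \<Longrightarrow> Y * (c + a^4*d) = (a*X + X*-a)*(1+e) + X*(a+-a)*f + Y*c - Y*P*B*d" for X Y P B a c d e f :: real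
proof -
  assume h: "P * B = - (a^4)"
  have "Y*P*B*d = Y*(P*B)*d" by (simp add: mult.assoc)
  then show ?thesis by (simp only: h) (simp add: algebra_simps)
qed
lemma gen2: "P * B = - (a^4) \<Longrightarrow> - Y * (c + a^4*d) = (a*X + X*-a)*(1+e) + X*(a+-a)*f - Y*c + Y*P*B*d" for X Y P B a c d e f :: real
proof -
  assume h: "P * B = - (a^4)"
  have "Y*P*B*d = Y*(P*B)*d" by (simp add: mult.assoc)
  then show ?thesis by (simp only: h) (simp add: algebra_simps)
qed

lemma oint_deriv:
  fixes f :: "real \<Rightarrow> real"
  assumes cf: "continuous_on UNIV f"
  shows "((\<lambda>t. oint f 0 t) has_real_derivative f t) (at t)"
proof -
  define c where "c = \<bar>t\<bar> + 1"
  have c: "-c < t" "t < c" "-c < 0" "0 < c" unfolding c_def by auto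
  have cc: "continuous_on {-c..c} f" using cf continuous_on_subset by blast
  have ii: "f integrable_on {p..q}" for p q
    by (rule integrable_continuous_real, rule continuous_on_subset[OF cf]) simp
  have eq: "integral {-c..u} f - integral {-c..0} f = oint f 0 u" if "u \<in> {-c<..<c}" for u
  proof (cases "0 \<le> u")
    case True
    have "integral {-c..0} f + integral {0..u} f = integral {-c..u} f"
      using Henstock_Kurzweil_Integration.integral_combine[of "-c" 0 u f] that True c ii by auto
    then show ?thesis using True by (simp add: oint_def)
  next
    case False
    have "integral {-c..u} f + integral {u..0} f = integral {-c..0} f"
      using Henstock_Kurzweil_Integration.integral_combine[of "-c" u 0 f] that False c ii by auto
    then show ?thesis using False by (simp add: oint_def)
  qed
  have "((\<lambda>u. integral {-c..u} f) has_vector_derivative f t) (at t within {-c..c})"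
    by (rule integral_has_vector_derivative[OF cc]) (use c in auto)
  then have "((\<lambda>u. integral {-c..u} f) has_real_derivative f t) (at t)"
    using c by (simp add: has_real_derivative_iff_has_vector_derivative at_within_Icc_at)
  then have "((\<lambda>u. integral {-c..u} f - integral {-c..0} f) has_real_derivative f t) (at t)"
    by (auto intro!: derivative_eq_intros)
  then show ?thesis
    by (rule has_field_derivative_transform_within_open[where S="{-c<..<c}"]) (use c eq in auto)
qed

lemma oint_periodic:
  fixes f :: "real \<Rightarrow> real"
  assumes cf: "continuous_on UNIV f" and per: "\<And>t. f (t + w) = f t" and w: "w > 0"
  shows "oint f 0 (t + w) = oint f 0 t + integral {0..w} f"
proof -
  have d: "((\<lambda>t. oint f 0 (t + w) - oint f 0 t) has_real_derivative 0) (at x)" for x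
  proof -
    have "((\<lambda>t. oint f 0 (t + w)) has_real_derivative f (x + w)) (at x)"
    proof -
      have "((\<lambda>t. t + w) has_real_derivative 1) (at x)" by (auto intro!: derivative_eq_intros)
      from DERIV_chain2[OF oint_deriv[OF cf, of "x+w"] this] show ?thesis by simp
    qed
    then show ?thesis using oint_deriv[OF cf, of x] per[of x]
      using DERIV_diff by fastforce
  qed
  have "oint f 0 (t + w) - oint f 0 t = oint f 0 (0 + w) - oint f 0 0"
    by (rule DERIV_isconst_all) (use d in blast)
  then show ?thesis using w by (simp add: oint_def)
qed
theorem theorem6:
  fixes a e \<omega> :: real and \<alpha>1 \<alpha>2 \<alpha>3 \<alpha>4 :: "real \<Rightarrow> real"
  assumes "\<omega> > 0"
    and "continuous_on UNIV \<alpha>1" and "continuous_on UNIV \<alpha>2"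
    and "continuous_on UNIV \<alpha>3" and "continuous_on UNIV \<alpha>4"
  shows
   "((\<forall>t. \<alpha>3 (t + \<omega>) = \<alpha>3 t) \<and> a * (a + e) < 0 \<and>
       (\<exists>k::int. integral {0..\<omega>} \<alpha>3 = 2 * pi * of_int k)
     \<longrightarrow>
     (let x = (\<lambda>t. sqrt (- (a * (a + e))) * sin (oint \<alpha>3 0 t));
          y = (\<lambda>t. sqrt (- (a * (a + e))) * cos (oint \<alpha>3 0 t));
          z = (\<lambda>t. - a)
      in (\<forall>t.
            (x has_real_derivative
               ((a * x t + x t * z t) * (1 + \<alpha>1 t) + x t * (a + z t) * \<alpha>2 t + y t * \<alpha>3 t)) (at t) \<and>
            (y has_real_derivative
               ((a * y t + y t * z t) * (1 + \<alpha>1 t) + y t * (a + z t) * \<alpha>2 t - x t * \<alpha>3 t)) (at t) \<and>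
            (z has_real_derivative
               ((e * z t - (x t)^2 - (y t)^2 - (z t)^2) * (1 + \<alpha>1 t + \<alpha>2 t))) (at t)) \<and>
         (\<forall>t. x (t + \<omega>) = x t \<and> y (t + \<omega>) = y t \<and> z (t + \<omega>) = z t)))
   \<and>
   ((\<forall>t. \<alpha>3 (t + \<omega>) + a^4 * \<alpha>4 (t + \<omega>) = \<alpha>3 t + a^4 * \<alpha>4 t) \<and>
       (\<exists>k::int. integral {0..\<omega>} (\<lambda>s. \<alpha>3 s + a^4 * \<alpha>4 s) = 2 * pi * of_int k)
     \<longrightarrow>
     (let x = (\<lambda>t. a * sin (oint (\<lambda>s. \<alpha>3 s + a^4 * \<alpha>4 s) 0 t));
          y = (\<lambda>t. a * cos (oint (\<lambda>s. \<alpha>3 s + a^4 * \<alpha>4 s) 0 t));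
          z = (\<lambda>t. - a)
      in (\<forall>t.
            (x has_real_derivative
               ((a * x t + x t * z t) * (1 + \<alpha>1 t) + x t * (a + z t) * \<alpha>2 t + y t * \<alpha>3 t
                - y t * ((x t)^2 + (y t)^2) * (4 * a * z t + (x t)^2 + (y t)^2 + 2 * (z t)^2) * \<alpha>4 t)) (at t) \<and>
            (y has_real_derivative
               ((a * y t + y t * z t) * (1 + \<alpha>1 t) + y t * (a + z t) * \<alpha>2 t - x t * \<alpha>3 t
                + x t * ((x t)^2 + (y t)^2) * (4 * a * z t + (x t)^2 + (y t)^2 + 2 * (z t)^2) * \<alpha>4 t)) (at t) \<and>
            (z has_real_derivative
               (- (2 * a * z t + (x t)^2 + (y t)^2 + (z t)^2) * (1 + \<alpha>1 t + \<alpha>2 t))) (at t)) \<and>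
         (\<forall>t. x (t + \<omega>) = x t \<and> y (t + \<omega>) = y t \<and> z (t + \<omega>) = z t)))"
proof (intro conjI impI)
  assume h: "(\<forall>t. \<alpha>3 (t + \<omega>) = \<alpha>3 t) \<and> a * (a + e) < 0 \<and>
       (\<exists>k::int. integral {0..\<omega>} \<alpha>3 = 2 * pi * of_int k)"
  then obtain k :: int where k: "integral {0..\<omega>} \<alpha>3 = 2 * pi * of_int k" by blast
  define r where "r = sqrt (- (a * (a + e)))"
  have r2: "r^2 = - (a * (a + e))" unfolding r_def using h by simp
  have per: "oint \<alpha>3 0 (t + \<omega>) = oint \<alpha>3 0 t + 2 * pi * of_int k" for t
    using oint_periodic[OF assms(4), of \<omega> t] h assms(1) k by auto
  have ds: "((\<lambda>t. r * sin (oint \<alpha>3 0 t)) has_real_derivative r * cos (oint \<alpha>3 0 t) * \<alpha>3 t) (at t)" for t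
    using oint_deriv[OF assms(4), of t] by (auto intro!: derivative_eq_intros)
  have dc: "((\<lambda>t. r * cos (oint \<alpha>3 0 t)) has_real_derivative - r * sin (oint \<alpha>3 0 t) * \<alpha>3 t) (at t)" for t
    using oint_deriv[OF assms(4), of t] by (auto intro!: derivative_eq_intros)
  have sc: "(r * sin u)^2 + (r * cos u)^2 = r^2" for u
  proof -
    have "r^2 * ((sin u)^2 + (cos u)^2) = r^2" by simp
    then show ?thesis by (simp only: power_mult_distrib distrib_left)
  qed
  show "let x = (\<lambda>t. sqrt (- (a * (a + e))) * sin (oint \<alpha>3 0 t));
          y = (\<lambda>t. sqrt (- (a * (a + e))) * cos (oint \<alpha>3 0 t));
          z = (\<lambda>t. - a)
      in (\<forall>t.
            (x has_real_derivative
               ((a * x t + x t * z t) * (1 + \<alpha>1 t) + x t * (a + z t) * \<alpha>2 t + y t * \<alpha>3 t)) (at t) \<and>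
            (y has_real_derivative
               ((a * y t + y t * z t) * (1 + \<alpha>1 t) + y t * (a + z t) * \<alpha>2 t - x t * \<alpha>3 t)) (at t) \<and>
            (z has_real_derivative
               ((e * z t - (x t)^2 - (y t)^2 - (z t)^2) * (1 + \<alpha>1 t + \<alpha>2 t))) (at t)) \<and>
         (\<forall>t. x (t + \<omega>) = x t \<and> y (t + \<omega>) = y t \<and> z (t + \<omega>) = z t)"
    unfolding Let_def r_def[symmetric]
  proof (intro conjI allI)
    fix t
    show "((\<lambda>t. r * sin (oint \<alpha>3 0 t)) has_real_derivative
        (a * (r * sin (oint \<alpha>3 0 t)) + r * sin (oint \<alpha>3 0 t) * - a) * (1 + \<alpha>1 t) +
        r * sin (oint \<alpha>3 0 t) * (a + - a) * \<alpha>2 t + r * cos (oint \<alpha>3 0 t) * \<alpha>3 t) (at t)"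
      using ds[of t] by simp
    show "((\<lambda>t. r * cos (oint \<alpha>3 0 t)) has_real_derivative
        (a * (r * cos (oint \<alpha>3 0 t)) + r * cos (oint \<alpha>3 0 t) * - a) * (1 + \<alpha>1 t) +
        r * cos (oint \<alpha>3 0 t) * (a + - a) * \<alpha>2 t - r * sin (oint \<alpha>3 0 t) * \<alpha>3 t) (at t)"
      using dc[of t] by simp
    have "e * - a - (r * sin (oint \<alpha>3 0 t))\<^sup>2 - (r * cos (oint \<alpha>3 0 t))\<^sup>2 - (- a)\<^sup>2 = 0"
      using sc[of "oint \<alpha>3 0 t"] r2 by (simp add: algebra_simps power2_eq_square)
    then show "((\<lambda>t. - a) has_real_derivative
        (e * - a - (r * sin (oint \<alpha>3 0 t))\<^sup>2 - (r * cos (oint \<alpha>3 0 t))\<^sup>2 - (- a)\<^sup>2) * (1 + \<alpha>1 t + \<alpha>2 t)) (at t)"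
      by simp
    show "r * sin (oint \<alpha>3 0 (t + \<omega>)) = r * sin (oint \<alpha>3 0 t)"
      unfolding per by (simp add: sin_add)
    show "r * cos (oint \<alpha>3 0 (t + \<omega>)) = r * cos (oint \<alpha>3 0 t)"
      unfolding per by (simp add: cos_add)
    show "- a = - a" by simp
  qed
next
  define g where "g = (\<lambda>s. \<alpha>3 s + a^4 * \<alpha>4 s)"
  have cg: "continuous_on UNIV g" unfolding g_def
    using assms(4,5) by (auto intro!: continuous_intros)
  assume h: "(\<forall>t. \<alpha>3 (t + \<omega>) + a^4 * \<alpha>4 (t + \<omega>) = \<alpha>3 t + a^4 * \<alpha>4 t) \<and>
       (\<exists>k::int. integral {0..\<omega>} (\<lambda>s. \<alpha>3 s + a^4 * \<alpha>4 s) = 2 * pi * of_int k)"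
  then obtain k :: int where k: "integral {0..\<omega>} g = 2 * pi * of_int k" unfolding g_def by blast
  have per: "oint g 0 (t + \<omega>) = oint g 0 t + 2 * pi * of_int k" for t
    using oint_periodic[OF cg, of \<omega> t] h assms(1) k unfolding g_def by auto
  have ds: "((\<lambda>t. a * sin (oint g 0 t)) has_real_derivative a * cos (oint g 0 t) * g t) (at t)" for t
    using oint_deriv[OF cg, of t] by (auto intro!: derivative_eq_intros)
  have dc: "((\<lambda>t. a * cos (oint g 0 t)) has_real_derivative - (a * sin (oint g 0 t)) * g t) (at t)" for t
    using oint_deriv[OF cg, of t] by (auto intro!: derivative_eq_intros)
  have sc: "(a * sin u)^2 + (a * cos u)^2 = a^2" for u
  proof -
    have "a^2 * ((sin u)^2 + (cos u)^2) = a^2" by simp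
    then show ?thesis by (simp only: power_mult_distrib distrib_left)
  qed
  show "let x = (\<lambda>t. a * sin (oint (\<lambda>s. \<alpha>3 s + a^4 * \<alpha>4 s) 0 t));
          y = (\<lambda>t. a * cos (oint (\<lambda>s. \<alpha>3 s + a^4 * \<alpha>4 s) 0 t));
          z = (\<lambda>t. - a)
      in (\<forall>t.
            (x has_real_derivative
               ((a * x t + x t * z t) * (1 + \<alpha>1 t) + x t * (a + z t) * \<alpha>2 t + y t * \<alpha>3 t
                - y t * ((x t)^2 + (y t)^2) * (4 * a * z t + (x t)^2 + (y t)^2 + 2 * (z t)^2) * \<alpha>4 t)) (at t) \<and>
            (y has_real_derivative
               ((a * y t + y t * z t) * (1 + \<alpha>1 t) + y t * (a + z t) * \<alpha>2 t - x t * \<alpha>3 t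
                + x t * ((x t)^2 + (y t)^2) * (4 * a * z t + (x t)^2 + (y t)^2 + 2 * (z t)^2) * \<alpha>4 t)) (at t) \<and>
            (z has_real_derivative
               (- (2 * a * z t + (x t)^2 + (y t)^2 + (z t)^2) * (1 + \<alpha>1 t + \<alpha>2 t))) (at t)) \<and>
         (\<forall>t. x (t + \<omega>) = x t \<and> y (t + \<omega>) = y t \<and> z (t + \<omega>) = z t)"
    unfolding Let_def g_def[symmetric]
  proof (intro conjI allI)
    fix t
    let ?x = "a * sin (oint g 0 t)" and ?y = "a * cos (oint g 0 t)"
    have s2: "?x^2 + ?y^2 = a^2" by (rule sc)
    have gv: "g t = \<alpha>3 t + a^4 * \<alpha>4 t" by (simp add: g_def)
    have q: "(?x^2 + ?y^2) * (4 * a * - a + ?x^2 + ?y^2 + 2 * (- a)^2) = - (a^4)"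
    proof -
      have gen: "4 * a * - a + X + Y + 2 * (- a)^2 = (X + Y) - 2 * a^2" for X Y :: real
        by (simp add: power2_eq_square)
      have "4 * a * - a + ?x^2 + ?y^2 + 2 * (- a)^2 = - (a^2)" unfolding gen s2 by simp
      then show ?thesis unfolding s2 by (simp add: power4_eq_xxxx power2_eq_square)
    qed
    show "((\<lambda>t. a * sin (oint g 0 t)) has_real_derivative
        (a * ?x + ?x * - a) * (1 + \<alpha>1 t) + ?x * (a + - a) * \<alpha>2 t + ?y * \<alpha>3 t
        - ?y * (?x^2 + ?y^2) * (4 * a * - a + ?x^2 + ?y^2 + 2 * (- a)^2) * \<alpha>4 t) (at t)"
      using ds[of t] unfolding gv gen1[OF q, of "?y" "\<alpha>3 t" "\<alpha>4 t" "?x" "\<alpha>1 t" "\<alpha>2 t"] .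
    show "((\<lambda>t. a * cos (oint g 0 t)) has_real_derivative
        (a * ?y + ?y * - a) * (1 + \<alpha>1 t) + ?y * (a + - a) * \<alpha>2 t - ?x * \<alpha>3 t
        + ?x * (?x^2 + ?y^2) * (4 * a * - a + ?x^2 + ?y^2 + 2 * (- a)^2) * \<alpha>4 t) (at t)"
      using dc[of t] unfolding gv gen2[OF q, of "?x" "\<alpha>3 t" "\<alpha>4 t" "?y" "\<alpha>1 t" "\<alpha>2 t"] .
    have e: "2 * a * - a + X + Y + (- a)^2 = (X + Y) - a^2" for X Y :: real
      by (simp add: power2_eq_square)
    have "- (2 * a * - a + ?x^2 + ?y^2 + (- a)^2) = 0"
      unfolding e s2 by simp
    then show "((\<lambda>t. - a) has_real_derivative
        - (2 * a * - a + ?x^2 + ?y^2 + (- a)^2) * (1 + \<alpha>1 t + \<alpha>2 t)) (at t)"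
      by simp
    show "a * sin (oint g 0 (t + \<omega>)) = a * sin (oint g 0 t)"
      unfolding per by (simp add: sin_add)
    show "a * cos (oint g 0 (t + \<omega>)) = a * cos (oint g 0 t)"
      unfolding per by (simp add: cos_add)
    show "- a = - a" by simp
  qed
qed

end
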